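(* Let $L$ be a finite graded lattice of rank $n$ with an $S_n$ EL-labeling, and let $\mathfrak m$ be a maximal chain of $L$. Then $Q_{\mathfrak m}$ is a sublattice of $L$ (its joins and meets coincide with those of $L$), and it is distributive.
   Context: An $S_n$ EL-labeling: edge-labeling of covering pairs such that each interval has exactly one maximal chain with weakly increasing labels (bottom to top), lexicographically smallest among its maximal chains, and labels along each maximal chain of $L$ form a permutation of $[n]$. $U_i(\mathfrak m)$ ($i\in[n-1]$) is the unique maximal chain agreeing with $\mathfrak m$ except possibly at rank $i$ whose labels have no descent at position $i$. $\mathcal{M}_{\mathfrak m}$ is the set of all chains $U_{i_1}\cdots U_{i_r}(\mathfrak m)$ over all finite sequences (including empty), and $Q_{\mathfrak m}$ is the subposet of $L$ consisting of all elements lying on some chain in $\mathcal{M}_{\mathfrak m}$. *)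

theory Defs
  imports Main
begin

definition covers :: "'a::order \<Rightarrow> 'a \<Rightarrow> bool" where
  "covers x y \<longleftrightarrow> x < y \<and> \<not> (\<exists>z. x < z \<and> z < y)"

definition sat_chain :: "'a::order list \<Rightarrow> bool" where
  "sat_chain c \<longleftrightarrow> c \<noteq> [] \<and> (\<forall>i. Suc i < length c \<longrightarrow> covers (c!i) (c!Suc i))"

definition interval_max_chain :: "'a::order \<Rightarrow> 'a \<Rightarrow> 'a list \<Rightarrow> bool" where
  "interval_max_chain x y c \<longleftrightarrow> sat_chain c \<and> hd c = x \<and> last c = y"

definition max_chain :: "'a::order list \<Rightarrow> bool" where
  "max_chain c \<longleftrightarrow> sat_chain c \<and> (\<forall>z. hd c \<le> z \<and> z \<le> last c)"

definition graded_rank :: "'a::order itself \<Rightarrow> nat \<Rightarrow> bool" where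
  "graded_rank _ n \<longleftrightarrow> (\<forall>c::'a list. max_chain c \<longrightarrow> length c = Suc n)"

definition chain_labels :: "('a \<Rightarrow> 'a \<Rightarrow> nat) \<Rightarrow> 'a list \<Rightarrow> nat list" where
  "chain_labels lab c = map (\<lambda>i. lab (c!i) (c!Suc i)) [0..<length c - 1]"

definition lex_le :: "nat list \<Rightarrow> nat list \<Rightarrow> bool" where
  "lex_le xs ys \<longleftrightarrow> xs = ys \<or> (xs, ys) \<in> lexord {(a, b). a < b}"

definition EL_labeling :: "('a::order \<Rightarrow> 'a \<Rightarrow> nat) \<Rightarrow> bool" where
  "EL_labeling lab \<longleftrightarrow>
     (\<forall>x y. x \<le> y \<longrightarrow>
        (\<exists>!c. interval_max_chain x y c \<and> sorted (chain_labels lab c)) \<and>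
        (\<forall>c c'. interval_max_chain x y c \<and> sorted (chain_labels lab c)
                \<and> interval_max_chain x y c' \<longrightarrow> lex_le (chain_labels lab c) (chain_labels lab c')))"

definition Sn_EL_labeling :: "nat \<Rightarrow> ('a::order \<Rightarrow> 'a \<Rightarrow> nat) \<Rightarrow> bool" where
  "Sn_EL_labeling n lab \<longleftrightarrow> EL_labeling lab \<and>
     (\<forall>c. max_chain c \<longrightarrow> distinct (chain_labels lab c) \<and> set (chain_labels lab c) = {1..n})"

definition U_op :: "('a::order \<Rightarrow> 'a \<Rightarrow> nat) \<Rightarrow> nat \<Rightarrow> 'a list \<Rightarrow> 'a list" where
  "U_op lab i m = (THE m'. max_chain m' \<and> length m' = length m \<and>
       (\<forall>j<length m. j \<noteq> i \<longrightarrow> m'!j = m!j) \<and>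
       lab (m'!(i-1)) (m'!i) \<le> lab (m'!i) (m'!Suc i))"

inductive_set M_chains :: "nat \<Rightarrow> ('a::order \<Rightarrow> 'a \<Rightarrow> nat) \<Rightarrow> 'a list \<Rightarrow> 'a list set"
  for n lab m where
    base: "m \<in> M_chains n lab m"
  | step: "c \<in> M_chains n lab m \<Longrightarrow> 1 \<le> i \<Longrightarrow> i \<le> n - 1 \<Longrightarrow> U_op lab i c \<in> M_chains n lab m"

definition Q_set :: "nat \<Rightarrow> ('a::order \<Rightarrow> 'a \<Rightarrow> nat) \<Rightarrow> 'a list \<Rightarrow> 'a set" where
  "Q_set n lab m = {x. \<exists>c \<in> M_chains n lab m. x \<in> set c}"

end

theory Submission
  imports Defs
begin


lemma sat_chain_single[simp]: "sat_chain [x]"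
  by (simp add: sat_chain_def)

lemma sat_chain_CC: "sat_chain (x#y#xs) \<longleftrightarrow> covers x y \<and> sat_chain (y#xs)"
proof
  assume h: "sat_chain (x#y#xs)"
  show "covers x y \<and> sat_chain (y#xs)"
  proof
    have "Suc 0 < length (x#y#xs)" by simp
    then have "covers ((x#y#xs)!0) ((x#y#xs)!Suc 0)" using h unfolding sat_chain_def by blast
    then show "covers x y" by simp
    show "sat_chain (y#xs)" unfolding sat_chain_def
    proof (intro conjI allI impI)
      fix i assume "Suc i < length (y#xs)"
      then have "Suc (Suc i) < length (x#y#xs)" by simp
      then have "covers ((x#y#xs)!Suc i) ((x#y#xs)!Suc (Suc i))" using h unfolding sat_chain_def by blast
      then show "covers ((y#xs)!i) ((y#xs)!Suc i)" by simp
    qed simp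
  qed
next
  assume h: "covers x y \<and> sat_chain (y#xs)"
  show "sat_chain (x#y#xs)" unfolding sat_chain_def
  proof (intro conjI allI impI)
    fix i assume i: "Suc i < length (x#y#xs)"
    show "covers ((x#y#xs)!i) ((x#y#xs)!Suc i)"
    proof (cases i)
      case 0 then show ?thesis using h by simp
    next
      case (Suc j)
      then have "Suc j < length (y#xs)" using i by simp
      then have "covers ((y#xs)!j) ((y#xs)!Suc j)" using h unfolding sat_chain_def by blast
      then show ?thesis using Suc by simp
    qed
  qed simp
qed

lemma chain_labels_single[simp]: "chain_labels lab [x] = []"
  by (simp add: chain_labels_def)

lemma chain_labels_CC[simp]: "chain_labels lab (x#y#xs) = lab x y # chain_labels lab (y#xs)"
  unfolding chain_labels_def
  by (simp add: upt_conv_Cons map_Suc_upt[symmetric] del: upt_Suc)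

lemma sat_chain_ne: "sat_chain c \<Longrightarrow> c \<noteq> []"
  by (simp add: sat_chain_def)

lemma chain_labels_length: "length (chain_labels lab c) = length c - 1"
  by (simp add: chain_labels_def)

lemma sat_chain_append:
  assumes "sat_chain c1" "sat_chain c2" "last c1 = hd c2"
  shows "sat_chain (c1 @ tl c2) \<and> chain_labels lab (c1 @ tl c2) = chain_labels lab c1 @ chain_labels lab c2
     \<and> hd (c1 @ tl c2) = hd c1 \<and> last (c1 @ tl c2) = last c2"
  using assms
proof (induction c1 rule: induct_list012)
  case 1 then show ?case by (simp add: sat_chain_def)
next
  case (2 x)
  then have "c2 = x # tl c2" using sat_chain_ne by (metis last_ConsL list.exhaust_sel)
  then show ?case using 2 by (metis append_Cons append_Nil chain_labels_single last_ConsL list.sel(1) self_append_conv2)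
next
  case (3 x y zs)
  have IH: "sat_chain ((y#zs) @ tl c2) \<and> chain_labels lab ((y#zs) @ tl c2) = chain_labels lab (y#zs) @ chain_labels lab c2
     \<and> hd ((y#zs) @ tl c2) = hd (y#zs) \<and> last ((y#zs) @ tl c2) = last c2"
    using 3 sat_chain_CC by (metis last_ConsR list.distinct(1))
  have "(x#y#zs) @ tl c2 = x # ((y#zs) @ tl c2)" by simp
  moreover have "(y#zs) @ tl c2 = y # (zs @ tl c2)" by simp
  have cov: "covers x y" using 3(3) sat_chain_CC by blast
  have e: "(x#y#zs) @ tl c2 = x # y # (zs @ tl c2)" by simp
  have s1: "sat_chain (x # y # (zs @ tl c2))" using IH cov sat_chain_CC by (metis \<open>(y#zs) @ tl c2 = y # (zs @ tl c2)\<close>)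
  have l1: "last (x # y # (zs @ tl c2)) = last c2" using IH by (metis \<open>(y#zs) @ tl c2 = y # (zs @ tl c2)\<close> last_ConsR list.distinct(1))
  show ?case unfolding e using s1 l1 IH by simp
qed

lemma sat_chain_less:
  assumes "sat_chain c" "i < j" "j < length c"
  shows "c!i < c!j"
  using assms(2,3)
proof (induction j)
  case 0 then show ?case by simp
next
  case (Suc j)
  have "covers (c!j) (c!Suc j)" using assms(1) Suc.prems unfolding sat_chain_def by blast
  then have "c!j < c!Suc j" by (simp add: covers_def)
  then show ?case using Suc by (cases "i = j") auto
qed

lemma sat_chain_le:
  assumes "sat_chain c" "i \<le> j" "j < length c"
  shows "c!i \<le> c!j"
  using sat_chain_less[OF assms(1)] assms(2,3) by (cases "i = j") (auto intro: less_imp_le)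

lemma sat_chain_between:
  assumes "sat_chain c" "z \<in> set c"
  shows "hd c \<le> z \<and> z \<le> last c"
proof -
  obtain i where i: "i < length c" "z = c!i" using assms(2) by (metis in_set_conv_nth)
  have ne: "c \<noteq> []" using assms(1) sat_chain_ne by blast
  have "hd c = c!0" using ne by (simp add: hd_conv_nth)
  moreover have "last c = c!(length c - 1)" using ne by (simp add: last_conv_nth)
  ultimately show ?thesis using sat_chain_le[OF assms(1)] i by auto
qed

lemma sat_chain_distinct: "sat_chain c \<Longrightarrow> distinct c"
  unfolding distinct_conv_nth
proof (intro allI impI)
  fix i j assume h: "sat_chain c" "i < length c" "j < length c" "i \<noteq> j"
  show "c!i \<noteq> c!j"
  proof (cases "i < j")
    case True then show ?thesis using sat_chain_less[OF h(1) True h(3)] by simp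
  next
    case False then have "j < i" using h by simp
    then show ?thesis using sat_chain_less[OF h(1) _ h(2)] by fastforce
  qed
qed

lemma sat_chain_exists:
  fixes x y :: "'a::{finite,order}"
  assumes "x \<le> y"
  shows "\<exists>c. sat_chain c \<and> hd c = x \<and> last c = y"
proof -
  have "\<And>x. x \<le> y \<Longrightarrow> card {z. x < z \<and> z \<le> y} = N \<Longrightarrow> \<exists>c. sat_chain c \<and> hd c = x \<and> last c = y" for N
  proof (induction N rule: less_induct)
    case (less N x)
    show ?case
    proof (cases "x = y")
      case True then show ?thesis by (intro exI[of _ "[x]"]) simp
    next
      case False
      define A where "A = {z. x < z \<and> z \<le> y}"
      have yA: "y \<in> A" unfolding A_def using False less.prems(1) by simp
      have "A \<noteq> {}" using yA by (rule ex_in_conv[THEN iffD1, OF exI])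
      have "\<exists>m\<in>A. \<forall>b\<in>A. b \<le> m \<longrightarrow> m = b" by (rule finite_has_minimal[OF finite \<open>A \<noteq> {}\<close>])
      then obtain x' where x'A: "x' \<in> A" and x'm: "\<forall>b\<in>A. b \<le> x' \<longrightarrow> x' = b" by (rule bexE)
      have x'1: "x < x'" "x' \<le> y" using x'A unfolding A_def by simp_all
      have x'2: "\<not> z < x'" if "x < z" "z \<le> y" for z
      proof
        assume "z < x'"
        then have "z \<in> A" "z \<le> x'" unfolding A_def using that by simp_all
        then have "x' = z" using x'm by blast
        then show False using \<open>z < x'\<close> by simp
      qed
      have cov: "covers x x'" unfolding covers_def using x'1 x'2 by (meson order_less_le_trans order.strict_implies_order)
      have sub: "{z. x' < z \<and> z \<le> y} \<subset> A" unfolding A_def using x'1 by auto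
      have "card {z. x' < z \<and> z \<le> y} < card A" by (rule psubset_card_mono[OF _ sub]) simp
      then have "card {z. x' < z \<and> z \<le> y} < N" using less.prems(2) unfolding A_def by simp
      then obtain c where c: "sat_chain c" "hd c = x'" "last c = y" using less.IH x'1(2) by blast
      have cne: "c \<noteq> []" using c(1) sat_chain_ne by blast
      have ce: "c = x' # tl c" using cne c(2) by (metis list.exhaust_sel)
      then have "sat_chain (x # x' # tl c)" using c cov sat_chain_CC by metis
      then have s: "sat_chain (x # c)" using ce by simp
      have "last (x # c) = y" using cne c(3) by simp
      then show ?thesis using s by (intro exI[of _ "x#c"]) simp
    qed
  qed
  then show ?thesis using assms by blast
qed


lemma chain_labels_nth: "j < length c - 1 \<Longrightarrow> chain_labels lab c ! j = lab (c!j) (c!Suc j)"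
  by (simp add: chain_labels_def)

definition seg :: "'a list \<Rightarrow> nat \<Rightarrow> nat \<Rightarrow> 'a list" where
  "seg c r s = drop r (take (Suc s) c)"

lemma seg_props:
  assumes "sat_chain c" "r \<le> s" "s < length c"
  shows "sat_chain (seg c r s) \<and> hd (seg c r s) = c!r \<and> last (seg c r s) = c!s
    \<and> length (seg c r s) = Suc (s - r) \<and> (\<forall>j\<le>s-r. seg c r s ! j = c!(r+j))"
proof -
  have len: "length (seg c r s) = Suc (s - r)" unfolding seg_def using assms by simp
  have nth: "\<forall>j\<le>s-r. seg c r s ! j = c!(r+j)" unfolding seg_def using assms by auto
  have ne: "seg c r s \<noteq> []" using len by auto
  have sc: "sat_chain (seg c r s)" unfolding sat_chain_def
  proof (intro conjI allI impI ne)
    fix i assume "Suc i < length (seg c r s)"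
    then have i: "Suc i \<le> s - r" using len by simp
    have "covers (c!(r+i)) (c!Suc (r+i))" using assms i unfolding sat_chain_def by auto
    then show "covers (seg c r s ! i) (seg c r s ! Suc i)" using nth i by simp
  qed
  have "hd (seg c r s) = c!r" using ne nth by (simp add: hd_conv_nth)
  moreover have "last (seg c r s) = c!s" using ne nth len assms(2) by (simp add: last_conv_nth)
  ultimately show ?thesis using sc len nth by blast
qed

locale sel =
  fixes lab :: "'a::{finite,lattice} \<Rightarrow> 'a \<Rightarrow> nat" and n :: nat and m :: "'a list"
  assumes graded: "graded_rank TYPE('a) n" and sn: "Sn_EL_labeling n lab" and mc: "max_chain m"
begin

definition "b0 = hd m"
definition "t0 = last m"

lemma b0_le: "b0 \<le> z" and le_t0: "z \<le> t0"
  using mc unfolding max_chain_def b0_def t0_def by auto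

lemma max_chain_iff: "max_chain (c::'a list) \<longleftrightarrow> sat_chain c \<and> hd c = b0 \<and> last c = t0"
  unfolding max_chain_def using b0_le le_t0 by (auto intro: order.antisym)

lemma max_chain_len: "max_chain (c::'a list) \<Longrightarrow> length c = Suc n"
  using graded unfolding graded_rank_def by blast

lemma max_labels: "max_chain (c::'a list) \<Longrightarrow> distinct (chain_labels lab c) \<and> set (chain_labels lab c) = {1..n}"
  using sn unfolding Sn_EL_labeling_def by blast

lemma EL: "EL_labeling lab"
  using sn unfolding Sn_EL_labeling_def by blast

definition "pch u = (SOME c. sat_chain c \<and> hd c = b0 \<and> last c = u)"
definition "sch v = (SOME c. sat_chain c \<and> hd c = v \<and> last c = t0)"

lemma pch: "sat_chain (pch u) \<and> hd (pch u) = b0 \<and> last (pch u) = u"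
  unfolding pch_def by (rule someI_ex, rule sat_chain_exists, rule b0_le)

lemma sch: "sat_chain (sch v) \<and> hd (sch v) = v \<and> last (sch v) = t0"
  unfolding sch_def by (rule someI_ex, rule sat_chain_exists, rule le_t0)

lemma key:
  assumes c: "sat_chain c" "hd c = u" "last c = v"
  shows "distinct (chain_labels lab c) \<and> set (chain_labels lab c) =
     {1..n} - set (chain_labels lab (pch u)) - set (chain_labels lab (sch v))"
proof -
  have a1: "sat_chain (pch u @ tl c) \<and> chain_labels lab (pch u @ tl c) = chain_labels lab (pch u) @ chain_labels lab c
     \<and> hd (pch u @ tl c) = b0 \<and> last (pch u @ tl c) = v"
    using sat_chain_append[of "pch u" c lab] pch c by simp
  have a2: "sat_chain ((pch u @ tl c) @ tl (sch v)) \<and> chain_labels lab ((pch u @ tl c) @ tl (sch v)) =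
      chain_labels lab (pch u @ tl c) @ chain_labels lab (sch v)
     \<and> hd ((pch u @ tl c) @ tl (sch v)) = b0 \<and> last ((pch u @ tl c) @ tl (sch v)) = t0"
    using sat_chain_append[of "pch u @ tl c" "sch v" lab] a1 sch by simp
  have mcf: "max_chain ((pch u @ tl c) @ tl (sch v))" using a2 max_chain_iff by blast
  have "distinct (chain_labels lab (pch u) @ chain_labels lab c @ chain_labels lab (sch v))
     \<and> set (chain_labels lab (pch u) @ chain_labels lab c @ chain_labels lab (sch v)) = {1..n}"
  proof -
    have eq: "chain_labels lab ((pch u @ tl c) @ tl (sch v)) = chain_labels lab (pch u) @ chain_labels lab c @ chain_labels lab (sch v)"
      using a1 a2 by simp
    show ?thesis using max_labels[OF mcf] unfolding eq .
  qed
  then show ?thesis unfolding distinct_append set_append by blast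
qed

definition "Lam u v = set (chain_labels lab (SOME c. sat_chain c \<and> hd c = u \<and> last c = v))"

lemma Lam_eq:
  assumes c: "sat_chain c" "hd c = u" "last c = v"
  shows "set (chain_labels lab c) = Lam u v \<and> distinct (chain_labels lab c)"
proof -
  let ?c = "SOME c. sat_chain c \<and> hd c = u \<and> last c = v"
  have "sat_chain ?c \<and> hd ?c = u \<and> last ?c = v" by (rule someI[of _ c]) (use c in blast)
  then show ?thesis using key[OF c] key[of ?c u v] unfolding Lam_def by auto
qed

lemma chain_le: "sat_chain c \<Longrightarrow> hd c \<le> last c"
proof -
  assume a: "sat_chain c"
  then have "hd c \<in> set c" using sat_chain_ne hd_in_set by blast
  then show ?thesis using sat_chain_between a by blast
qed

lemma Lam_len:
  assumes c: "sat_chain c" "hd c = u" "last c = v"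
  shows "length c = Suc (card (Lam u v))"
proof -
  have "card (Lam u v) = length (chain_labels lab c)" using Lam_eq[OF c] distinct_card by metis
  then show ?thesis using chain_labels_length[of lab c] sat_chain_ne[OF c(1)] by (cases c) auto
qed

lemma Lam_trans:
  assumes "u \<le> v" "v \<le> w"
  shows "Lam u w = Lam u v \<union> Lam v w \<and> Lam u v \<inter> Lam v w = {}"
proof -
  obtain c1 where c1: "sat_chain c1" "hd c1 = u" "last c1 = v" using sat_chain_exists assms(1) by blast
  obtain c2 where c2: "sat_chain c2" "hd c2 = v" "last c2 = w" using sat_chain_exists assms(2) by blast
  have a: "sat_chain (c1 @ tl c2) \<and> chain_labels lab (c1 @ tl c2) = chain_labels lab c1 @ chain_labels lab c2
     \<and> hd (c1 @ tl c2) = u \<and> last (c1 @ tl c2) = w"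
    using sat_chain_append[of c1 c2 lab] c1 c2 by simp
  then have "set (chain_labels lab c1 @ chain_labels lab c2) = Lam u w \<and> distinct (chain_labels lab c1 @ chain_labels lab c2)"
    using Lam_eq[of "c1 @ tl c2" u w] by simp
  then show ?thesis using Lam_eq[OF c1] Lam_eq[OF c2] by auto
qed

lemma Lam_cover: "covers u v \<Longrightarrow> Lam u v = {lab u v}"
  using Lam_eq[of "[u,v]" u v] sat_chain_CC[of u v "[]"] by simp

lemma Lam_refl: "Lam u u = {}"
  using Lam_eq[of "[u]" u u] by simp

lemma Lam_ne:
  assumes "u < v" shows "Lam u v \<noteq> {}"
proof -
  obtain c where c: "sat_chain c" "hd c = u" "last c = v" using sat_chain_exists assms by (meson less_imp_le)
  have "length c \<noteq> 1" using c assms by (cases c) auto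
  then have "card (Lam u v) \<noteq> 0" using Lam_len[OF c] by simp
  then show ?thesis by auto
qed

lemma Lam_finite: "finite (Lam u v)"
  unfolding Lam_def by simp

definition "S z = Lam b0 z"

lemma S_finite: "finite (S z)" unfolding S_def by (rule Lam_finite)

lemma S_Lam: "u \<le> v \<Longrightarrow> S v = S u \<union> Lam u v \<and> S u \<inter> Lam u v = {}"
  unfolding S_def by (rule Lam_trans[OF b0_le])

lemma S_mono: "u \<le> v \<Longrightarrow> S u \<subseteq> S v"
proof -
  assume "u \<le> v"
  then have "S v = S u \<union> Lam u v" using S_Lam by blast
  then show ?thesis by (simp add: Un_upper1)
qed

lemma S_strict: "u < v \<Longrightarrow> S u \<subset> S v"
proof -
  assume a: "u < v"
  then have e: "S v = S u \<union> Lam u v \<and> S u \<inter> Lam u v = {}" using S_Lam less_imp_le by blast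
  obtain l where "l \<in> Lam u v" using Lam_ne[OF a] by blast
  then have "l \<in> S v" "l \<notin> S u" using e by auto
  then show ?thesis using e by auto
qed

lemma S_card_less: "u < v \<Longrightarrow> card (S u) < card (S v)"
  by (rule psubset_card_mono[OF S_finite S_strict])

lemma cover_card:
  assumes "u \<le> v" "card (S v) = Suc (card (S u))"
  shows "covers u v"
proof -
  have "u \<noteq> v" using assms(2) by auto
  then have uv: "u < v" using assms(1) by simp
  have "\<not> (u < z \<and> z < v)" for z
  proof
    assume h: "u < z \<and> z < v"
    have "card (S u) < card (S z)" using S_card_less h by blast
    moreover have "card (S z) < card (S v)" using S_card_less h by blast
    ultimately show False using assms(2) by simp
  qed
  then show ?thesis unfolding covers_def using uv by blast
qed

lemma cover_lab:
  assumes "covers u v" shows "S v = insert (lab u v) (S u) \<and> lab u v \<notin> S u"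
proof -
  have "u \<le> v" using assms unfolding covers_def by (simp add: less_imp_le)
  then have e: "S v = S u \<union> Lam u v \<and> S u \<inter> Lam u v = {}" using S_Lam by blast
  then show ?thesis using Lam_cover[OF assms] by auto
qed

definition "inc u v = (THE c. interval_max_chain u v c \<and> sorted (chain_labels lab c))"

lemma inc_ex: "u \<le> v \<Longrightarrow> \<exists>!c. interval_max_chain u v c \<and> sorted (chain_labels lab c)"
  using EL unfolding EL_labeling_def by blast

lemma inc_prop:
  assumes "u \<le> v"
  shows "sat_chain (inc u v) \<and> hd (inc u v) = u \<and> last (inc u v) = v \<and> sorted (chain_labels lab (inc u v))"
  using theI'[OF inc_ex[OF assms]] unfolding inc_def interval_max_chain_def by blast

lemma inc_uniq:
  assumes "sat_chain c" "hd c = u" "last c = v" "sorted (chain_labels lab c)"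
  shows "c = inc u v"
proof -
  have "u \<le> v" using chain_le assms by blast
  then show ?thesis unfolding inc_def using the1_equality[OF inc_ex] assms interval_max_chain_def by metis
qed

definition "step u v = inc u v ! 1"

lemma step_prop:
  assumes "u < v"
  shows "covers u (step u v) \<and> step u v \<le> v \<and> lab u (step u v) \<in> Lam u v \<and> (\<forall>l\<in>Lam u v. lab u (step u v) \<le> l)"
proof -
  let ?c = "inc u v"
  have p: "sat_chain ?c" "hd ?c = u" "last ?c = v" "sorted (chain_labels lab ?c)"
    using inc_prop assms by (auto simp: less_imp_le)
  have "length ?c \<noteq> 1" using p assms by (cases ?c) auto
  moreover have "?c \<noteq> []" using p sat_chain_ne by blast
  ultimately obtain w rest where ce: "?c = u # w # rest" using p(2)
    by (metis One_nat_def length_Cons list.exhaust_sel list.size(3))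
  have sw: "step u v = w" unfolding step_def ce by simp
  have cov: "covers u w" using p(1) ce sat_chain_CC by metis
  have "w \<in> set ?c" using ce by simp
  then have wv: "w \<le> v" using sat_chain_between[OF p(1)] p(3) by simp
  have L: "set (chain_labels lab ?c) = Lam u v" using Lam_eq p by blast
  have lab: "chain_labels lab ?c = lab u w # chain_labels lab (w#rest)" using ce by simp
  have L2: "Lam u v = insert (lab u w) (set (chain_labels lab (w#rest)))" using L lab by simp
  have so: "sorted (lab u w # chain_labels lab (w#rest))" using p(4) lab by simp
  show ?thesis using sw cov wv L2 so by auto
qed

lemma step_eq:
  assumes "u < y" "y \<le> x" "l \<in> Lam u y" "\<forall>l'\<in>Lam u x. l \<le> l'"
  shows "step u y = step u x"
proof -
  let ?w = "step u y"
  have sp: "covers u ?w" "?w \<le> y" "lab u ?w \<le> l" using step_prop[OF assms(1)] assms(3) by auto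
  have wx: "?w \<le> x" using sp(2) assms(2) by simp
  let ?d = "inc ?w x"
  have d: "sat_chain ?d" "hd ?d = ?w" "last ?d = x" "sorted (chain_labels lab ?d)" using inc_prop[OF wx] by auto
  obtain tail where de: "?d = ?w # tail" using d(2) sat_chain_ne[OF d(1)] by (cases "?d") auto
  have "sat_chain (?w # tail)" using d(1) de by simp
  then have sc: "sat_chain (u # ?w # tail)" using sp(1) sat_chain_CC by blast
  have uw: "u \<le> ?w" using sp(1) unfolding covers_def by (simp add: less_imp_le)
  have sub: "Lam ?w x \<subseteq> Lam u x" using Lam_trans[OF uw wx] by blast
  have "lab u ?w \<le> l'" if "l' \<in> set (chain_labels lab (?w # tail))" for l'
  proof -
    have "l' \<in> Lam ?w x" using Lam_eq[OF d(1-3)] that de by simp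
    then have "l \<le> l'" using sub assms(4) by blast
    then show ?thesis using sp(3) by simp
  qed
  moreover have "sorted (chain_labels lab (?w # tail))" using d(4) de by simp
  ultimately have so: "sorted (chain_labels lab (u # ?w # tail))" by simp
  have "last (u # ?w # tail) = x" using d(3) de by simp
  then have "u # ?w # tail = inc u x" using inc_uniq[OF sc _ _ so] by simp
  then have "inc u x ! 1 = (u # ?w # tail) ! 1" by simp
  then have "inc u x ! 1 = ?w" by simp
  then show ?thesis unfolding step_def by simp
qed

end



lemma len3: "length xs = Suc (Suc (Suc 0)) \<Longrightarrow> \<exists>a b d. xs = [a,b,d]"
  apply (cases xs, simp)
  apply (rename_tac a t, case_tac t, simp)
  apply (rename_tac b t2, case_tac t2, simp)
  apply auto
  done

context sel begin

lemma max_sat: "max_chain (c::'a list) \<Longrightarrow> sat_chain c"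
  using max_chain_iff by blast

lemma max_hd: "max_chain (c::'a list) \<Longrightarrow> c!0 = b0"
  using max_chain_iff sat_chain_ne by (metis hd_conv_nth)

lemma max_last: "max_chain (c::'a list) \<Longrightarrow> c!n = t0"
proof -
  assume a: "max_chain c"
  then have "c \<noteq> []" "length c = Suc n" using max_chain_len max_sat sat_chain_ne by auto
  then show ?thesis using a max_chain_iff by (simp add: last_conv_nth)
qed

lemma max_cover: "max_chain (c::'a list) \<Longrightarrow> j < n \<Longrightarrow> covers (c!j) (c!Suc j)"
  using max_sat max_chain_len unfolding sat_chain_def by (metis Suc_less_eq)

lemma sat3: "covers u y \<Longrightarrow> covers y v \<Longrightarrow> sat_chain [u,y,v]"
  using sat_chain_CC[of u y "[v]"] sat_chain_CC[of y v "[]"] by simp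

lemma sat3D: "sat_chain [u,y,v] \<Longrightarrow> covers u y \<and> covers y v"
  using sat_chain_CC[of u y "[v]"] sat_chain_CC[of y v "[]"] by simp

lemma step_cover:
  assumes "covers u v" shows "step u v = v"
proof -
  have "sat_chain [u,v]" using assms sat_chain_CC[of u v "[]"] by simp
  then have "[u,v] = inc u v" using inc_uniq[of "[u,v]" u v] by simp
  then show ?thesis unfolding step_def by (metis nth_Cons_0 nth_Cons_Suc One_nat_def)
qed

lemma triple:
  assumes c: "max_chain (c::'a list)" and i: "1 \<le> i" "i < n"
  shows "inc (c!(i-1)) (c!Suc i) = [c!(i-1), step (c!(i-1)) (c!Suc i), c!Suc i]
    \<and> Lam (c!(i-1)) (c!Suc i) = {lab (c!(i-1)) (c!i), lab (c!i) (c!Suc i)}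
    \<and> card (Lam (c!(i-1)) (c!Suc i)) = 2"
proof -
  let ?u = "c!(i-1)" and ?y = "c!i" and ?v = "c!Suc i"
  have c1: "covers ?u ?y" using max_cover[OF c, of "i-1"] i by simp
  have c2: "covers ?y ?v" using max_cover[OF c, of i] i by simp
  have s3: "sat_chain [?u,?y,?v]" using sat3 c1 c2 .
  have L3: "length [?u,?y,?v] = Suc (card (Lam ?u ?v))" using Lam_len[OF s3] by simp
  have Lset: "Lam ?u ?v = {lab ?u ?y, lab ?y ?v}" using Lam_eq[OF s3] by simp
  have uv: "?u \<le> ?v" using chain_le[OF s3] by simp
  have ip: "sat_chain (inc ?u ?v)" "hd (inc ?u ?v) = ?u" "last (inc ?u ?v) = ?v" using inc_prop[OF uv] by auto
  have "length (inc ?u ?v) = Suc (card (Lam ?u ?v))" using Lam_len[OF ip] .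
  then have "length (inc ?u ?v) = Suc (Suc (Suc 0))" using L3 by simp
  then obtain a b d where e: "inc ?u ?v = [a,b,d]" using len3 by blast
  have "a = ?u" "d = ?v" using ip(2,3) e by auto
  moreover have "b = step ?u ?v" unfolding step_def using e by simp
  ultimately show ?thesis using e Lset L3 by simp
qed

lemma upd_max:
  assumes c: "max_chain (c::'a list)" and i: "1 \<le> i" "i < n"
    and c1: "covers (c!(i-1)) z" and c2: "covers z (c!Suc i)"
  shows "max_chain (c[i := z])"
proof -
  have len: "length c = Suc n" using max_chain_len c by blast
  have sc: "sat_chain (c[i:=z])" unfolding sat_chain_def
  proof (intro conjI allI impI)
    show "c[i:=z] \<noteq> []" using len by (metis list_update_nonempty length_0_conv nat.distinct(1))
  next
    fix j assume j: "Suc j < length (c[i:=z])"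
    then have j': "j < n" using len by simp
    show "covers (c[i:=z] ! j) (c[i:=z] ! Suc j)"
    proof (cases "j = i - 1")
      case True
      then have "Suc j = i" using i by simp
      then show ?thesis using True c1 len i j' by simp
    next
      case False
      show ?thesis
      proof (cases "j = i")
        case True then show ?thesis using c2 len i by simp
      next
        case False2: False
        have "Suc j \<noteq> i" using False i by auto
        then show ?thesis using False2 max_cover[OF c j'] by simp
      qed
    qed
  qed
  have ne: "c[i:=z] \<noteq> []" using sc sat_chain_ne by blast
  have "c[i:=z] ! 0 = b0" using i max_hd[OF c] by simp
  then have h: "hd (c[i:=z]) = b0" using ne by (metis hd_conv_nth)
  have "c[i:=z] ! n = t0" using i max_last[OF c] by simp
  then have "last (c[i:=z]) = t0" using last_conv_nth[OF ne] len by simp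
  with h show ?thesis using sc max_chain_iff by blast
qed

lemma U_eq:
  assumes c: "max_chain (c::'a list)" and i: "1 \<le> i" "i < n"
  shows "U_op lab i c = c[i := step (c!(i-1)) (c!Suc i)]"
proof -
  let ?u = "c!(i-1)" and ?v = "c!Suc i"
  let ?z = "step ?u ?v"
  have T: "inc ?u ?v = [?u, ?z, ?v]" using triple[OF assms] by blast
  have uv: "?u \<le> ?v" using sat_chain_le[OF max_sat[OF c], of "i-1" "Suc i"] max_chain_len[OF c] i by simp
  have ip: "sat_chain [?u, ?z, ?v]" "sorted (chain_labels lab [?u, ?z, ?v])" using inc_prop[OF uv] T by metis+
  have c1: "covers ?u ?z" and c2: "covers ?z ?v" using sat3D[OF ip(1)] by auto
  have srt: "lab ?u ?z \<le> lab ?z ?v" using ip(2) by simp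
  have len: "length c = Suc n" using max_chain_len c by blast
  let ?P = "\<lambda>m'. max_chain m' \<and> length m' = length c \<and>
       (\<forall>j<length c. j \<noteq> i \<longrightarrow> m'!j = c!j) \<and>
       lab (m'!(i-1)) (m'!i) \<le> lab (m'!i) (m'!Suc i)"
  have im1: "i - 1 \<noteq> i" using i by simp
  have si: "Suc i \<noteq> i" by simp
  have P1: "?P (c[i := ?z])"
  proof (intro conjI allI impI)
    show "max_chain (c[i := ?z])" using upd_max[OF c i c1 c2] .
    show "length (c[i := ?z]) = length c" by simp
    fix j assume "j < length c" "j \<noteq> i" then show "c[i := ?z] ! j = c ! j" by simp
  next
    show "lab (c[i := ?z] ! (i-1)) (c[i := ?z] ! i) \<le> lab (c[i := ?z] ! i) (c[i := ?z] ! Suc i)"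
      using srt im1 len i by simp
  qed
  have P2: "d = c[i := ?z]" if d: "?P d" for d
  proof -
    have ld: "length d = Suc n" using d len by simp
    have du: "d!(i-1) = ?u" using d im1 len i by simp
    have dv: "d!Suc i = ?v" using d len i by simp
    have d1: "covers ?u (d!i)" using max_cover[of d "i-1"] d du i by simp
    have d2: "covers (d!i) ?v" using max_cover[of d i] d dv i by simp
    have "sat_chain [?u, d!i, ?v]" using sat3 d1 d2 .
    moreover have "sorted (chain_labels lab [?u, d!i, ?v])" using d du dv by simp
    ultimately have "[?u, d!i, ?v] = inc ?u ?v" using inc_uniq by simp
    then have "d!i = ?z" using T by simp
    then show ?thesis
    proof (intro nth_equalityI)
      show "length d = length (c[i := ?z])" using ld len by simp
      fix j assume j: "j < length d"
      show "d!j = c[i := ?z] ! j"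
      proof (cases "j = i")
        case True then show ?thesis using \<open>d!i = ?z\<close> len i by simp
      next
        case False then show ?thesis using d j ld len by simp
      qed
    qed
  qed
  show ?thesis unfolding U_op_def using P1 P2 by (rule the_equality)
qed

abbreviation "MM \<equiv> M_chains n lab m"

lemma U_facts:
  assumes c: "max_chain (c::'a list)" and i: "1 \<le> i" "i < n"
  shows "covers (c!(i-1)) (step (c!(i-1)) (c!Suc i)) \<and> covers (step (c!(i-1)) (c!Suc i)) (c!Suc i)
    \<and> lab (c!(i-1)) (step (c!(i-1)) (c!Suc i)) \<le> lab (step (c!(i-1)) (c!Suc i)) (c!Suc i)
    \<and> max_chain (U_op lab i c)"
proof -
  let ?u = "c!(i-1)" and ?v = "c!Suc i"
  let ?z = "step ?u ?v"
  have T: "inc ?u ?v = [?u, ?z, ?v]" using triple[OF assms] by blast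
  have uv: "?u \<le> ?v" using sat_chain_le[OF max_sat[OF c], of "i-1" "Suc i"] max_chain_len[OF c] i by simp
  have ip: "sat_chain [?u, ?z, ?v]" "sorted (chain_labels lab [?u, ?z, ?v])" using inc_prop[OF uv] T by metis+
  have c1: "covers ?u ?z" and c2: "covers ?z ?v" using sat3D[OF ip(1)] by auto
  have srt: "lab ?u ?z \<le> lab ?z ?v" using ip(2) by simp
  show ?thesis using c1 c2 srt upd_max[OF c i c1 c2] U_eq[OF assms] by simp
qed

lemma M_max: "(c::'a list) \<in> MM \<Longrightarrow> max_chain c"
proof (induction rule: M_chains.induct)
  case base then show ?case using mc .
next
  case (step c i)
  then have "i < n" by simp
  then show ?case using U_facts step by blast
qed

lemma swap_labels:
  assumes c: "max_chain (c::'a list)" and i: "1 \<le> i" "i < n"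
    and desc: "\<not> lab (c!(i-1)) (c!i) \<le> lab (c!i) (c!Suc i)"
  shows "lab (c!(i-1)) (step (c!(i-1)) (c!Suc i)) = lab (c!i) (c!Suc i)
       \<and> lab (step (c!(i-1)) (c!Suc i)) (c!Suc i) = lab (c!(i-1)) (c!i)"
proof -
  let ?u = "c!(i-1)" and ?v = "c!Suc i" and ?y = "c!i"
  let ?z = "step ?u ?v"
  have T: "inc ?u ?v = [?u, ?z, ?v]" and L: "Lam ?u ?v = {lab ?u ?y, lab ?y ?v}" using triple[OF assms(1-3)] by blast+
  have uv: "?u \<le> ?v" using sat_chain_le[OF max_sat[OF c], of "i-1" "Suc i"] max_chain_len[OF c] i by simp
  have ip: "sat_chain [?u, ?z, ?v]" "sorted (chain_labels lab [?u, ?z, ?v])" using inc_prop[OF uv] T by metis+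
  have L2: "Lam ?u ?v = {lab ?u ?z, lab ?z ?v}" using Lam_eq[OF ip(1)] by simp
  have srt: "lab ?u ?z \<le> lab ?z ?v" using ip(2) by simp
  let ?a = "lab ?u ?y" and ?b = "lab ?y ?v" and ?p = "lab ?u ?z" and ?q = "lab ?z ?v"
  have e: "{?a, ?b} = {?p, ?q}" using L L2 by simp
  have "?b < ?a" using desc by simp
  then show ?thesis using e srt by (metis doubleton_eq_iff le_antisym less_imp_le_nat not_le)
qed

end


context sel begin

definition "lp j = lab (m!(j-1)) (m!j)"
definition "LP k = lp ` {1..k}"
definition "ideal A \<longleftrightarrow> (\<forall>i j. 1 \<le> i \<longrightarrow> i < j \<longrightarrow> j \<le> n \<longrightarrow> lp j \<in> A \<longrightarrow> lp i < lp j \<longrightarrow> lp i \<in> A)"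

lemma m_len: "length m = Suc n" using max_chain_len mc by blast

lemma pi_lab: "1 \<le> j \<Longrightarrow> j \<le> n \<Longrightarrow> chain_labels lab m ! (j-1) = lp j"
  using chain_labels_nth[of "j-1" m lab] m_len unfolding lp_def by simp

lemma pi_inj: "1 \<le> i \<Longrightarrow> i \<le> n \<Longrightarrow> 1 \<le> j \<Longrightarrow> j \<le> n \<Longrightarrow> lp i = lp j \<Longrightarrow> i = j"
proof -
  assume a: "1 \<le> i" "i \<le> n" "1 \<le> j" "j \<le> n" "lp i = lp j"
  have d: "distinct (chain_labels lab m)" using max_labels mc by blast
  have l: "length (chain_labels lab m) = n" using chain_labels_length[of lab m] m_len by simp
  have "chain_labels lab m ! (i-1) = chain_labels lab m ! (j-1)" using pi_lab a by simp
  then have "i - 1 = j - 1" using nth_eq_iff_index_eq[OF d] a l by simp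
  then show ?thesis using a by simp
qed

lemma Pi_Suc: "LP (Suc k) = insert (lp (Suc k)) (LP k)"
  unfolding LP_def by (simp add: atLeastAtMostSuc_conv)

lemma Pi_0: "LP 0 = {}" unfolding LP_def by simp

lemma pi_notin: "Suc k \<le> n \<Longrightarrow> lp (Suc k) \<notin> LP k"
proof
  assume a: "Suc k \<le> n" "lp (Suc k) \<in> LP k"
  then obtain j where j: "1 \<le> j" "j \<le> k" "lp (Suc k) = lp j" unfolding LP_def by auto
  then have "Suc k = j" using pi_inj[of "Suc k" j] a by simp
  then show False using j by simp
qed

lemma pi_notin2: "k \<le> j \<Longrightarrow> Suc j \<le> n \<Longrightarrow> lp (Suc j) \<notin> LP k"
proof
  assume a: "k \<le> j" "Suc j \<le> n" "lp (Suc j) \<in> LP k"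
  then obtain i where i: "1 \<le> i" "i \<le> k" "lp (Suc j) = lp i" unfolding LP_def by auto
  then have "Suc j = i" using pi_inj[of "Suc j" i] a by simp
  then show False using i a by simp
qed

lemma card_Pi: "k \<le> n \<Longrightarrow> card (LP k) = k"
proof (induction k)
  case 0 then show ?case by (simp add: Pi_0)
next
  case (Suc k)
  have "finite (LP k)" unfolding LP_def by simp
  then show ?case using Suc pi_notin[of k] Pi_Suc[of k] by simp
qed

lemma Pi_mono: "k \<le> j \<Longrightarrow> LP k \<subseteq> LP j"
  unfolding LP_def by auto

lemma S_m: "k \<le> n \<Longrightarrow> S (m!k) = LP k"
proof (induction k)
  case 0
  have "m!0 = b0" using max_hd mc by blast
  then show ?case unfolding S_def using Lam_refl Pi_0 by simp
next
  case (Suc k)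
  have cv: "covers (m!k) (m!Suc k)" using max_cover[OF mc] Suc by simp
  have "S (m!Suc k) = insert (lab (m!k) (m!Suc k)) (S (m!k))" using cover_lab[OF cv] by blast
  also have "\<dots> = insert (lp (Suc k)) (LP k)" using Suc unfolding lp_def by simp
  finally show ?case using Pi_Suc by simp
qed

lemma S_sub_Pi: "S z \<subseteq> LP n"
proof -
  have "S z \<subseteq> S t0" using S_mono le_t0 by blast
  moreover have "t0 = m!n" using max_last mc by simp
  ultimately show ?thesis using S_m by simp
qed

lemma ideal_Pi: "k \<le> n \<Longrightarrow> ideal (LP k)"
  unfolding ideal_def
proof (intro allI impI)
  fix i j assume a: "k \<le> n" "1 \<le> i" "i < j" "j \<le> n" "lp j \<in> LP k" "lp i < lp j"
  then obtain j' where j': "1 \<le> j'" "j' \<le> k" "lp j = lp j'" unfolding LP_def by auto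
  then have "j = j'" using pi_inj[of j j'] a by simp
  then show "lp i \<in> LP k" using a j' unfolding LP_def by auto
qed

lemma sub_Pi_Suc: "A \<subseteq> LP (Suc k) \<Longrightarrow> lp (Suc k) \<notin> A \<Longrightarrow> A \<subseteq> LP k"
  unfolding Pi_Suc[of k] by blast

lemma remove_top:
  assumes k: "Suc k \<le> n" and A: "ideal A" "A \<subseteq> LP (Suc k)" "lp (Suc k) \<in> A"
  shows "ideal (A - {lp (Suc k)}) \<and> A - {lp (Suc k)} \<subseteq> LP k"
proof
  show sub: "A - {lp (Suc k)} \<subseteq> LP k" using A(2) Pi_Suc by blast
  show "ideal (A - {lp (Suc k)})" unfolding ideal_def
  proof (intro allI impI)
    fix i j assume a: "1 \<le> i" "i < j" "j \<le> n" "lp j \<in> A - {lp (Suc k)}" "lp i < lp j"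
    then have "lp i \<in> A" using A(1) unfolding ideal_def by blast
    moreover have "lp i \<noteq> lp (Suc k)"
    proof
      assume "lp i = lp (Suc k)"
      then have "i = Suc k" using pi_inj[of i "Suc k"] a k by simp
      moreover have "lp j \<in> LP k" using a sub by blast
      then obtain j' where "1 \<le> j'" "j' \<le> k" "lp j = lp j'" unfolding LP_def by auto
      then have "j \<le> k" using pi_inj[of j j'] a k by simp
      ultimately show False using a by simp
    qed
    ultimately show "lp i \<in> A - {lp (Suc k)}" by simp
  qed
qed

lemma minp:
  assumes k: "Suc k \<le> n" and A: "ideal A" "lp (Suc k) \<in> A"
    and l: "l \<in> LP (Suc k)" "l \<notin> A - {lp (Suc k)}"
  shows "lp (Suc k) \<le> l"
proof -
  obtain j where j: "1 \<le> j" "j \<le> Suc k" "l = lp j" using l(1) unfolding LP_def by auto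
  show ?thesis
  proof (cases "j = Suc k")
    case True then show ?thesis using j by simp
  next
    case False
    show ?thesis
    proof (rule ccontr)
      assume "\<not> lp (Suc k) \<le> l"
      then have lt: "lp j < lp (Suc k)" using j by simp
      have jlt: "j < Suc k" using j False by simp
      have "lp j \<in> A" using A(1)[unfolded ideal_def, rule_format, of j "Suc k"] A(2) lt j jlt k by simp
      moreover have "lp j \<noteq> lp (Suc k)" using lt by simp
      ultimately show False using l(2) j by simp
    qed
  qed
qed

fun E :: "nat \<Rightarrow> nat set \<Rightarrow> 'a" where
  "E 0 A = b0"
| "E (Suc k) A = (if lp (Suc k) \<in> A then step (E k (A - {lp (Suc k)})) (m!Suc k) else E k A)"

lemma Lam_S: "u \<le> v \<Longrightarrow> Lam u v = S v - S u"
  using S_Lam[of u v] by blast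

lemma E_props: "k \<le> n \<Longrightarrow> ideal A \<Longrightarrow> A \<subseteq> LP k \<Longrightarrow> E k A \<le> m!k \<and> S (E k A) = A"
proof (induction k arbitrary: A)
  case 0
  then have "A = {}" using Pi_0 by simp
  moreover have "m!0 = b0" using max_hd mc by blast
  ultimately show ?case unfolding S_def using Lam_refl by simp
next
  case (Suc k)
  let ?p = "lp (Suc k)" and ?x = "m!Suc k"
  have mk: "m!k \<le> ?x" using max_cover[OF mc, of k] Suc.prems unfolding covers_def by (simp add: less_imp_le)
  show ?case
  proof (cases "?p \<in> A")
    case False
    then have "A \<subseteq> LP k" using sub_Pi_Suc Suc.prems by blast
    then have "E k A \<le> m!k \<and> S (E k A) = A" using Suc by simp
    then show ?thesis using False mk by auto
  next
    case True
    let ?A' = "A - {?p}"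
    have r: "ideal ?A'" "?A' \<subseteq> LP k" using remove_top Suc.prems True by blast+
    let ?u = "E k ?A'"
    have IH: "?u \<le> m!k" "S ?u = ?A'" using Suc.IH[OF _ r] Suc.prems by auto
    have ux: "?u \<le> ?x" using IH mk by simp
    have Sx: "S ?x = LP (Suc k)" using S_m Suc.prems by blast
    have "?u \<noteq> ?x" using IH Sx Pi_Suc by auto
    then have ux': "?u < ?x" using ux by simp
    let ?w = "step ?u ?x"
    have sp: "covers ?u ?w" "?w \<le> ?x" "lab ?u ?w \<in> Lam ?u ?x" "\<forall>l\<in>Lam ?u ?x. lab ?u ?w \<le> l"
      using step_prop[OF ux'] by auto
    have L: "Lam ?u ?x = LP (Suc k) - ?A'" using Lam_S[OF ux] Sx IH by simp
    have pL: "?p \<in> Lam ?u ?x" using L Pi_Suc by simp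
    have "lab ?u ?w \<le> ?p" using sp(4) pL by blast
    moreover have "?p \<le> lab ?u ?w" using minp[of k A "lab ?u ?w"] Suc.prems True sp(3) L by simp
    ultimately have lw: "lab ?u ?w = ?p" by simp
    have "S ?w = insert ?p ?A'" using cover_lab[OF sp(1)] lw IH by simp
    then have "S ?w = A" using True by (simp add: insert_absorb)
    moreover have "E (Suc k) A = ?w" using True by simp
    ultimately show ?thesis using sp(2) by simp
  qed
qed

lemma E_mono: "k \<le> n \<Longrightarrow> ideal A \<Longrightarrow> ideal B \<Longrightarrow> A \<subseteq> B \<Longrightarrow> B \<subseteq> LP k \<Longrightarrow> E k A \<le> E k B"
proof (induction k arbitrary: A B)
  case 0 then show ?case by simp
next
  case (Suc k)
  let ?p = "lp (Suc k)" and ?x = "m!Suc k"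
  have mk: "m!k \<le> ?x" using max_cover[OF mc, of k] Suc.prems unfolding covers_def by (simp add: less_imp_le)
  have Sx: "S ?x = LP (Suc k)" using S_m Suc.prems by blast
  show ?case
  proof (cases "?p \<in> B")
    case False
    then have "?p \<notin> A" using Suc.prems by blast
    moreover have "B \<subseteq> LP k" using sub_Pi_Suc Suc.prems False by blast
    ultimately show ?thesis using Suc.IH Suc.prems False by simp
  next
    case True
    let ?B' = "B - {?p}"
    have rB: "ideal ?B'" "?B' \<subseteq> LP k" using remove_top Suc.prems True by blast+
    let ?u' = "E k ?B'"
    have IHB: "?u' \<le> m!k" "S ?u' = ?B'" using E_props[OF _ rB] Suc.prems by auto
    have "?u' \<noteq> ?x" using IHB Sx Pi_Suc by auto
    then have ux': "?u' < ?x" using IHB mk by simp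
    let ?w' = "step ?u' ?x"
    have EB: "E (Suc k) B = ?w'" using True by simp
    have sp': "covers ?u' ?w'" "?w' \<le> ?x" using step_prop[OF ux'] by auto
    have SB: "S ?w' = B" using E_props[OF Suc.prems(1,3,5)] EB by simp
    show ?thesis
    proof (cases "?p \<in> A")
      case False
      then have "A \<subseteq> LP k" using sub_Pi_Suc Suc.prems by blast
      moreover have "A \<subseteq> ?B'" using False Suc.prems by blast
      ultimately have "E k A \<le> ?u'" using Suc.IH[of A ?B'] Suc.prems rB by simp
      moreover have "?u' \<le> ?w'" using sp'(1) unfolding covers_def by (simp add: less_imp_le)
      ultimately show ?thesis using False EB by simp
    next
      case TA: True
      let ?A' = "A - {?p}"
      have APi: "A \<subseteq> LP (Suc k)" using Suc.prems by blast
      have rA: "ideal ?A'" "?A' \<subseteq> LP k" using remove_top[OF _ _ APi TA] Suc.prems by blast+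
      let ?u = "E k ?A'"
      have IHA: "?u \<le> m!k" "S ?u = ?A'" using E_props[OF _ rA] Suc.prems by auto
      have AB: "?A' \<subseteq> ?B'" using Suc.prems(4) by blast
      have uu': "?u \<le> ?u'" using Suc.IH[OF _ rA(1) rB(1) AB rB(2)] Suc.prems by simp
      have uw': "?u < ?w'" using uu' sp'(1) unfolding covers_def by (meson order_le_less_trans)
      have ux: "?u \<le> ?x" using IHA mk by simp
      have L: "Lam ?u ?x = LP (Suc k) - ?A'" using Lam_S[OF ux] Sx IHA by simp
      have pL: "?p \<in> Lam ?u ?w'" using Lam_S[of ?u ?w'] uw' SB IHA True by simp
      have mn: "\<forall>l'\<in>Lam ?u ?x. ?p \<le> l'" using minp[of k A] Suc.prems TA L by simp
      have "step ?u ?w' = step ?u ?x" using step_eq[OF uw' sp'(2) pL mn] .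
      moreover have "step ?u ?w' \<le> ?w'" using step_prop[OF uw'] by blast
      moreover have "E (Suc k) A = step ?u ?x" using TA by simp
      ultimately show ?thesis using EB by simp
    qed
  qed
qed

lemma E_ext: "k \<le> j \<Longrightarrow> j \<le> n \<Longrightarrow> A \<subseteq> LP k \<Longrightarrow> E j A = E k A"
proof (induction j)
  case 0 then show ?case by simp
next
  case (Suc j)
  show ?case
  proof (cases "k = Suc j")
    case True then show ?thesis by simp
  next
    case False
    then have kj: "k \<le> j" using Suc by simp
    have "lp (Suc j) \<notin> A" using pi_notin2[OF kj] Suc by blast
    then show ?thesis using Suc kj by simp
  qed
qed

lemma E_Pi: "k \<le> n \<Longrightarrow> E k (LP k) = m!k"
proof (induction k)
  case 0 then show ?case using max_hd mc by simp
next
  case (Suc k)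
  have "LP (Suc k) - {lp (Suc k)} = LP k" using Pi_Suc pi_notin Suc by auto
  moreover have "lp (Suc k) \<in> LP (Suc k)" using Pi_Suc by simp
  ultimately have "E (Suc k) (LP (Suc k)) = step (m!k) (m!Suc k)" using Suc by simp
  then show ?case using step_cover max_cover[OF mc] Suc by simp
qed

end


context sel begin

lemma key_swap:
  assumes c: "max_chain (c::'a list)" and i: "1 \<le> i" "i < n"
    and IH: "\<forall>r\<le>n. ideal (S (c!r)) \<and> c!r = E n (S (c!r))"
  shows "ideal (S (step (c!(i-1)) (c!Suc i))) \<and> step (c!(i-1)) (c!Suc i) = E n (S (step (c!(i-1)) (c!Suc i)))"
proof -
  let ?u = "c!(i-1)" and ?y = "c!i" and ?v = "c!Suc i"
  let ?z = "step ?u ?v"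
  have T: "inc ?u ?v = [?u, ?z, ?v]" and L: "Lam ?u ?v = {lab ?u ?y, lab ?y ?v}" using triple[OF c i] by blast+
  have UF: "covers ?u ?z" "covers ?z ?v" "lab ?u ?z \<le> lab ?z ?v" using U_facts[OF c i] by blast+
  show ?thesis
  proof (cases "?z = ?y")
    case True
    then show ?thesis using IH i by simp
  next
    case False
    have desc: "\<not> lab ?u ?y \<le> lab ?y ?v"
    proof
      assume le: "lab ?u ?y \<le> lab ?y ?v"
      have c1: "covers ?u ?y" using max_cover[OF c, of "i-1"] i by simp
      have c2: "covers ?y ?v" using max_cover[OF c, of i] i by simp
      have "sat_chain [?u, ?y, ?v]" using sat3[OF c1 c2] .
      moreover have "sorted (chain_labels lab [?u, ?y, ?v])" using le by simp
      ultimately have "[?u, ?y, ?v] = inc ?u ?v" using inc_uniq by simp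
      then show False using T False by simp
    qed
    have sw: "lab ?u ?z = lab ?y ?v" "lab ?z ?v = lab ?u ?y" using swap_labels[OF c i desc] by blast+
    define p where "p = lab ?u ?z"
    define q where "q = lab ?z ?v"
    have pq: "p < q" using desc sw unfolding p_def q_def by simp
    have Lpq: "Lam ?u ?v = {p, q}" using L sw unfolding p_def q_def by auto
    have uv: "?u \<le> ?v" using UF(1,2) unfolding covers_def by (meson less_imp_le order.strict_trans)
    define B where "B = S ?u"
    define C where "C = S ?v"
    have SL: "C = B \<union> {p,q}" "B \<inter> {p,q} = {}" using S_Lam[OF uv] Lpq unfolding B_def C_def by auto
    have pB: "p \<notin> B" and qB: "q \<notin> B" using SL(2) by auto
    have iB: "ideal B" "?u = E n B" using IH i unfolding B_def by auto
    have iC: "ideal C" "?v = E n C" using IH i unfolding C_def by auto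
    have ipB: "ideal (insert p B)" unfolding ideal_def
    proof (intro allI impI)
      fix i' j assume a: "1 \<le> i'" "i' < j" "j \<le> n" "lp j \<in> insert p B" "lp i' < lp j"
      show "lp i' \<in> insert p B"
      proof (cases "lp j \<in> B")
        case True then show ?thesis using iB(1) a unfolding ideal_def by blast
      next
        case False
        then have "lp j = p" using a by simp
        then have "lp j \<in> C" using SL by simp
        then have "lp i' \<in> C" using iC(1) a unfolding ideal_def by blast
        moreover have "lp i' \<noteq> q" using a \<open>lp j = p\<close> pq by simp
        ultimately show ?thesis using SL(1) by auto
      qed
    qed
    have CPi: "C \<subseteq> LP n" unfolding C_def by (rule S_sub_Pi)
    have sub1: "B \<subseteq> insert p B" by blast
    have sub2: "insert p B \<subseteq> C" using SL by blast
    have sub3: "insert p B \<subseteq> LP n" using sub2 CPi by blast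
    define e where "e = E n (insert p B)"
    have Se: "S e = insert p B" using E_props[OF _ ipB sub3] unfolding e_def by simp
    have ue: "?u \<le> e" using E_mono[OF _ iB(1) ipB sub1 sub3] iB(2) unfolding e_def by simp
    have ev: "e \<le> ?v" using E_mono[OF _ ipB iC(1) sub2 CPi] iC(2) unfolding e_def by simp
    have fB: "finite B" unfolding B_def by (rule S_finite)
    have cuv1: "covers ?u e"
    proof (rule cover_card[OF ue])
      have SuB: "S ?u = B" unfolding B_def ..
      show "card (S e) = Suc (card (S ?u))" unfolding SuB Se using fB pB by simp
    qed
    have Ceq: "C = insert q (insert p B)" using SL by auto
    have qpB: "q \<notin> insert p B" using qB pq by simp
    have cuv2: "covers e ?v"
    proof (rule cover_card[OF ev])
      have SvC: "S ?v = C" unfolding C_def ..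
      have "finite (insert p B)" using fB by simp
      then show "card (S ?v) = Suc (card (S e))" unfolding SvC Se Ceq using qpB by simp
    qed
    have l1: "lab ?u e = p"
    proof -
      have "S e = insert (lab ?u e) B" "lab ?u e \<notin> B" using cover_lab[OF cuv1] unfolding B_def by auto
      then show ?thesis using Se by auto
    qed
    have l2: "lab e ?v = q"
    proof -
      have "C = insert (lab e ?v) (insert p B)" "lab e ?v \<notin> insert p B" using cover_lab[OF cuv2] Se unfolding C_def by auto
      then show ?thesis using Ceq by auto
    qed
    have "sat_chain [?u, e, ?v]" using sat3 cuv1 cuv2 .
    moreover have "sorted (chain_labels lab [?u, e, ?v])" using l1 l2 pq by simp
    ultimately have "[?u, e, ?v] = inc ?u ?v" using inc_uniq by simp
    then have "e = ?z" using T by simp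
    then show ?thesis using Se ipB e_def by simp
  qed
qed

lemma M_E: "c \<in> MM \<Longrightarrow> \<forall>r\<le>n. ideal (S (c!r)) \<and> c!r = E n (S (c!r))"
proof (induction rule: M_chains.induct)
  case base
  show ?case
  proof (intro allI impI)
    fix r assume r: "r \<le> n"
    have "S (m!r) = LP r" using S_m r by blast
    moreover have "E n (LP r) = m!r" using E_ext[of r n "LP r"] E_Pi r by simp
    ultimately show "ideal (S (m!r)) \<and> m!r = E n (S (m!r))" using ideal_Pi r by simp
  qed
next
  case (step c i)
  have cm: "max_chain c" using M_max step by blast
  have i: "1 \<le> i" "i < n" using step by auto
  have U: "U_op lab i c = c[i := step (c!(i-1)) (c!Suc i)]" using U_eq[OF cm i] .
  have len: "length c = Suc n" using max_chain_len cm by blast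
  have K: "ideal (S (step (c!(i-1)) (c!Suc i))) \<and> step (c!(i-1)) (c!Suc i) = E n (S (step (c!(i-1)) (c!Suc i)))"
    using key_swap[OF cm i step.IH] .
  show ?case
  proof (intro allI impI)
    fix r assume r: "r \<le> n"
    show "ideal (S (U_op lab i c ! r)) \<and> U_op lab i c ! r = E n (S (U_op lab i c ! r))"
    proof (cases "r = i")
      case True then show ?thesis using U K len i by simp
    next
      case False then show ?thesis using U step.IH r by simp
    qed
  qed
qed

lemma sum_split2:
  fixes g :: "nat \<Rightarrow> nat"
  assumes "1 \<le> i" "i < n"
  shows "(\<Sum>j<n. g j) = (\<Sum>j\<in>{..<n}-{i-1,i}. g j) + g (i-1) + g i"
proof -
  have "(\<Sum>j<n. g j) = g i + (\<Sum>j\<in>{..<n}-{i}. g j)" by (rule sum.remove) (use assms in auto)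
  moreover have "(\<Sum>j\<in>{..<n}-{i}. g j) = g (i-1) + (\<Sum>j\<in>{..<n}-{i}-{i-1}. g j)" by (rule sum.remove) (use assms in auto)
  moreover have "{..<n}-{i}-{i-1} = {..<n}-{i-1,i}" by auto
  ultimately show ?thesis by simp
qed

definition "ff d = (\<Sum>j<n. j * lab (d!j) (d!Suc j))"

lemma ff_incr:
  assumes c: "max_chain (c::'a list)" and i: "1 \<le> i" "i < n"
    and desc: "\<not> lab (c!(i-1)) (c!i) \<le> lab (c!i) (c!Suc i)"
  shows "ff c < ff (U_op lab i c)"
proof -
  let ?u = "c!(i-1)" and ?y = "c!i" and ?v = "c!Suc i"
  let ?z = "step ?u ?v"
  let ?d = "c[i := ?z]"
  have U: "U_op lab i c = ?d" using U_eq[OF c i] .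
  have len: "length c = Suc n" using max_chain_len c by blast
  have sw: "lab ?u ?z = lab ?y ?v" "lab ?z ?v = lab ?u ?y" using swap_labels[OF c i desc] by blast+
  let ?g = "\<lambda>e j. j * lab (e!j) (e!Suc j)"
  have eq: "(\<Sum>j\<in>{..<n}-{i-1,i}. ?g ?d j) = (\<Sum>j\<in>{..<n}-{i-1,i}. ?g c j)"
  proof (rule sum.cong)
    fix j assume "j \<in> {..<n}-{i-1,i}"
    then have "j \<noteq> i" "Suc j \<noteq> i" using i by auto
    then show "?g ?d j = ?g c j" by simp
  qed simp
  have d1: "?g ?d (i-1) = (i-1) * lab ?y ?v" using sw i len by simp
  have d2: "?g ?d i = i * lab ?u ?y" using sw i len by simp
  have "ff ?d = (\<Sum>j\<in>{..<n}-{i-1,i}. ?g ?d j) + ?g ?d (i-1) + ?g ?d i"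
    unfolding ff_def by (rule sum_split2[OF i])
  then have "ff ?d = (\<Sum>j\<in>{..<n}-{i-1,i}. ?g c j) + (i-1) * lab ?y ?v + i * lab ?u ?y"
    by (simp only: eq d1 d2)
  moreover have "ff c = (\<Sum>j\<in>{..<n}-{i-1,i}. ?g c j) + ?g c (i-1) + ?g c i"
    unfolding ff_def by (rule sum_split2[OF i])
  then have "ff c = (\<Sum>j\<in>{..<n}-{i-1,i}. ?g c j) + (i-1) * lab ?u ?y + i * lab ?y ?v"
    using i by simp
  moreover have "(i-1) * lab ?u ?y + i * lab ?y ?v < (i-1) * lab ?y ?v + i * lab ?u ?y"
  proof -
    obtain i0 where i0: "i = Suc i0" using i by (cases i) auto
    have "lab ?y ?v < lab ?u ?y" using desc by simp
    then show ?thesis unfolding i0 by simp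
  qed
  ultimately show ?thesis using U by simp
qed

lemma sort_seg:
  assumes c: "c \<in> MM" and rs: "r < s" "s \<le> n"
  shows "\<exists>d\<in>MM. (\<forall>j\<le>n. (j \<le> r \<or> s \<le> j) \<longrightarrow> d!j = c!j) \<and> d!(Suc r) = step (c!r) (c!s)"
proof -
  define T where "T = {d \<in> MM. \<forall>j\<le>n. (j \<le> r \<or> s \<le> j) \<longrightarrow> d!j = c!j}"
  have "T \<subseteq> {xs. set xs \<subseteq> UNIV \<and> length xs = Suc n}" unfolding T_def using M_max max_chain_len by blast
  then have fT: "finite T" using finite_lists_length_eq[OF finite_UNIV] finite_subset by blast
  have cT: "c \<in> T" unfolding T_def using c by simp
  have fF: "finite (ff ` T)" using fT by simp
  have neF: "ff ` T \<noteq> {}" using cT by blast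
  obtain d where dT: "d \<in> T" and dmax: "ff d = Max (ff ` T)" using Max_in[OF fF neF] by auto
  have dge: "ff d' \<le> ff d" if "d' \<in> T" for d' using Max_ge[OF fF] that dmax by simp
  have dM: "d \<in> MM" and dc: "\<forall>j\<le>n. (j \<le> r \<or> s \<le> j) \<longrightarrow> d!j = c!j" using dT unfolding T_def by auto
  have dmc: "max_chain d" using M_max dM by blast
  have dlen: "length d = Suc n" using max_chain_len dmc by blast
  have nodesc: "lab (d!(i-1)) (d!i) \<le> lab (d!i) (d!Suc i)" if "r < i" "i < s" for i
  proof (rule ccontr)
    assume desc: "\<not> lab (d!(i-1)) (d!i) \<le> lab (d!i) (d!Suc i)"
    have i: "1 \<le> i" "i < n" using that rs by auto
    have "i \<le> n - 1" using i by simp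
    then have UM: "U_op lab i d \<in> MM" using M_chains.step[OF dM i(1)] by simp
    have "U_op lab i d = d[i := step (d!(i-1)) (d!Suc i)]" using U_eq[OF dmc i] .
    then have "\<forall>j\<le>n. (j \<le> r \<or> s \<le> j) \<longrightarrow> U_op lab i d ! j = c!j" using dc that by auto
    then have "U_op lab i d \<in> T" unfolding T_def using UM by simp
    then have "ff (U_op lab i d) \<le> ff d" using dge by blast
    moreover have "ff d < ff (U_op lab i d)" using ff_incr[OF dmc i desc] .
    ultimately show False by simp
  qed
  have rs': "r \<le> s" "s < length d" using rs dlen by auto
  have sp: "sat_chain (seg d r s)" "hd (seg d r s) = d!r" "last (seg d r s) = d!s"
    "length (seg d r s) = Suc (s - r)" "\<forall>j\<le>s-r. seg d r s ! j = d!(r+j)"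
    using seg_props[OF max_sat[OF dmc] rs'] by blast+
  have so: "sorted (chain_labels lab (seg d r s))" unfolding sorted_iff_nth_Suc
  proof (intro allI impI)
    fix j assume j: "Suc j < length (chain_labels lab (seg d r s))"
    then have j': "Suc j < s - r" using chain_labels_length[of lab "seg d r s"] sp(4) by simp
    have e1: "chain_labels lab (seg d r s) ! j = lab (d!(r+j)) (d!(r + Suc j))"
      using chain_labels_nth[of j "seg d r s" lab] sp(4,5) j' by simp
    have e2: "chain_labels lab (seg d r s) ! Suc j = lab (d!(r + Suc j)) (d!(r + Suc (Suc j)))"
      using chain_labels_nth[of "Suc j" "seg d r s" lab] sp(4,5) j' by simp
    have "lab (d!(r + Suc j - 1)) (d!(r + Suc j)) \<le> lab (d!(r + Suc j)) (d!Suc (r + Suc j))"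
      using nodesc[of "r + Suc j"] j' by simp
    then show "chain_labels lab (seg d r s) ! j \<le> chain_labels lab (seg d r s) ! Suc j"
      using e1 e2 by simp
  qed
  have "d!r = c!r" "d!s = c!s" using dc rs by auto
  then have "seg d r s = inc (c!r) (c!s)" using inc_uniq[OF sp(1) _ _ so] sp(2,3) by simp
  then have "step (c!r) (c!s) = seg d r s ! 1" unfolding step_def by simp
  also have "\<dots> = d!(Suc r)" using sp(5) rs by simp
  finally show ?thesis using dM dc by auto
qed

lemma card_S_chain:
  assumes "max_chain (c::'a list)" "r \<le> n"
  shows "card (S (c!r)) = r"
proof -
  have len: "length c = Suc n" using max_chain_len assms by blast
  have sp: "sat_chain (seg c 0 r)" "hd (seg c 0 r) = c!0" "last (seg c 0 r) = c!r" "length (seg c 0 r) = Suc r"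
    using seg_props[OF max_sat[OF assms(1)], of 0 r] assms len by auto
  have "c!0 = b0" using max_hd assms by blast
  then show ?thesis using Lam_len[OF sp(1-3)] sp(4) unfolding S_def by simp
qed

lemma E_in_M: "k \<le> n \<Longrightarrow> ideal A \<Longrightarrow> A \<subseteq> LP k \<Longrightarrow>
   \<exists>c\<in>MM. (\<exists>r\<le>n. c!r = E k A) \<and> (\<forall>j. k \<le> j \<longrightarrow> j \<le> n \<longrightarrow> c!j = m!j)"
proof (induction k arbitrary: A)
  case 0
  have "m!0 = b0" using max_hd mc by blast
  then show ?case using M_chains.base by (intro bexI[of _ m]) auto
next
  case (Suc k)
  let ?p = "lp (Suc k)"
  show ?case
  proof (cases "?p \<in> A")
    case False
    then have "A \<subseteq> LP k" using sub_Pi_Suc Suc.prems by blast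
    then obtain c where c: "c \<in> MM" "\<exists>r\<le>n. c!r = E k A" "\<forall>j. k \<le> j \<longrightarrow> j \<le> n \<longrightarrow> c!j = m!j"
      using Suc.IH[OF _ Suc.prems(2) \<open>A \<subseteq> LP k\<close>] Suc.prems(1) by auto
    then show ?thesis using False by (intro bexI[of _ c]) auto
  next
    case True
    let ?A' = "A - {?p}"
    have r: "ideal ?A'" "?A' \<subseteq> LP k" using remove_top Suc.prems True by blast+
    obtain c r where c: "c \<in> MM" "r \<le> n" "c!r = E k ?A'" "\<forall>j. k \<le> j \<longrightarrow> j \<le> n \<longrightarrow> c!j = m!j"
      using Suc.IH[OF _ r] Suc.prems by auto
    have cm: "max_chain c" using M_max c by blast
    have "S (c!r) = ?A'" using E_props[OF _ r] c Suc.prems by simp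
    then have "card ?A' = r" using card_S_chain[OF cm c(2)] by simp
    moreover have "card ?A' \<le> card (LP k)" using r(2) by (rule card_mono[rotated]) (simp add: LP_def)
    ultimately have rk: "r \<le> k" using card_Pi Suc.prems by simp
    obtain d where d: "d \<in> MM" "\<forall>j\<le>n. (j \<le> r \<or> Suc k \<le> j) \<longrightarrow> d!j = c!j" "d!(Suc r) = step (c!r) (c!Suc k)"
      using sort_seg[OF c(1), of r "Suc k"] rk Suc.prems by auto
    have "c!Suc k = m!Suc k" using c(4) Suc.prems by simp
    then have "d!(Suc r) = E (Suc k) A" using d(3) c(3) True by simp
    moreover have "Suc r \<le> n" using rk Suc.prems by simp
    moreover have "\<forall>j. Suc k \<le> j \<longrightarrow> j \<le> n \<longrightarrow> d!j = m!j" using d(2) c(4) by simp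
    ultimately show ?thesis using d(1) by blast
  qed
qed

end


context sel begin

abbreviation "QQ \<equiv> Q_set n lab m"

lemma Q_iff: "x \<in> QQ \<longleftrightarrow> (\<exists>c\<in>MM. \<exists>r\<le>n. x = c!r)"
proof
  assume "x \<in> QQ"
  then obtain c where c: "c \<in> MM" "x \<in> set c" unfolding Q_set_def by blast
  then have "length c = Suc n" using M_max max_chain_len by blast
  then obtain r where "r \<le> n" "x = c!r" using c(2) by (metis in_set_conv_nth less_Suc_eq_le)
  then show "\<exists>c\<in>MM. \<exists>r\<le>n. x = c!r" using c(1) by blast
next
  assume "\<exists>c\<in>MM. \<exists>r\<le>n. x = c!r"
  then obtain c r where c: "c \<in> MM" "r \<le> n" "x = c!r" by blast
  then have "length c = Suc n" using M_max max_chain_len by blast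
  then have "x \<in> set c" using c by simp
  then show "x \<in> QQ" unfolding Q_set_def using c(1) by blast
qed

lemma Q_E: "x \<in> QQ \<Longrightarrow> ideal (S x) \<and> x = E n (S x)"
proof -
  assume "x \<in> QQ"
  then obtain c r where c: "c \<in> MM" "r \<le> n" "x = c!r" unfolding Q_iff by blast
  have "\<forall>r\<le>n. ideal (S (c!r)) \<and> c!r = E n (S (c!r))" using M_E[OF c(1)] .
  then show ?thesis using c by simp
qed

lemma E_Q: "ideal A \<Longrightarrow> A \<subseteq> LP n \<Longrightarrow> E n A \<in> QQ"
proof -
  assume a: "ideal A" "A \<subseteq> LP n"
  have "\<exists>c\<in>MM. \<exists>r\<le>n. c!r = E n A" using E_in_M[of n A] a by blast
  then obtain c r where c: "c \<in> MM" "r \<le> n" "c!r = E n A" by blast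
  show ?thesis unfolding Q_iff by (rule bexI[OF _ c(1)], rule exI[of _ r]) (use c in simp)
qed

lemma ideal_Un: "ideal A \<Longrightarrow> ideal B \<Longrightarrow> ideal (A \<union> B)"
  unfolding ideal_def
proof (intro allI impI)
  fix i j assume a: "\<forall>i j. 1 \<le> i \<longrightarrow> i < j \<longrightarrow> j \<le> n \<longrightarrow> lp j \<in> A \<longrightarrow> lp i < lp j \<longrightarrow> lp i \<in> A"
    "\<forall>i j. 1 \<le> i \<longrightarrow> i < j \<longrightarrow> j \<le> n \<longrightarrow> lp j \<in> B \<longrightarrow> lp i < lp j \<longrightarrow> lp i \<in> B"
    "1 \<le> i" "i < j" "j \<le> n" "lp j \<in> A \<union> B" "lp i < lp j"
  show "lp i \<in> A \<union> B"
  proof (cases "lp j \<in> A")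
    case True then show ?thesis using a(1)[rule_format, of i j] a(3-7) by simp
  next
    case False then have "lp j \<in> B" using a(6) by simp
    then show ?thesis using a(2)[rule_format, of i j] a(3-7) by simp
  qed
qed

lemma ideal_Int: "ideal A \<Longrightarrow> ideal B \<Longrightarrow> ideal (A \<inter> B)"
  unfolding ideal_def
proof (intro allI impI)
  fix i j assume a: "\<forall>i j. 1 \<le> i \<longrightarrow> i < j \<longrightarrow> j \<le> n \<longrightarrow> lp j \<in> A \<longrightarrow> lp i < lp j \<longrightarrow> lp i \<in> A"
    "\<forall>i j. 1 \<le> i \<longrightarrow> i < j \<longrightarrow> j \<le> n \<longrightarrow> lp j \<in> B \<longrightarrow> lp i < lp j \<longrightarrow> lp i \<in> B"
    "1 \<le> i" "i < j" "j \<le> n" "lp j \<in> A \<inter> B" "lp i < lp j"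
  show "lp i \<in> A \<inter> B" using a(1)[rule_format, of i j] a(2)[rule_format, of i j] a(3-7) by simp
qed

lemma join_Q:
  assumes x: "x \<in> QQ" and y: "y \<in> QQ"
  shows "sup x y = E n (S x \<union> S y)"
proof -
  have ix: "ideal (S x)" "x = E n (S x)" using Q_E x by blast+
  have iy: "ideal (S y)" "y = E n (S y)" using Q_E y by blast+
  have iu: "ideal (S x \<union> S y)" using ideal_Un ix iy by blast
  have su: "S x \<union> S y \<subseteq> LP n" using S_sub_Pi by blast
  define e where "e = E n (S x \<union> S y)"
  have Se: "S e = S x \<union> S y" using E_props[OF _ iu su] unfolding e_def by simp
  have "x \<le> e" using E_mono[OF _ ix(1) iu _ su] ix(2) unfolding e_def by simp
  moreover have "y \<le> e" using E_mono[OF _ iy(1) iu _ su] iy(2) unfolding e_def by simp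
  ultimately have le: "sup x y \<le> e" by simp
  have ge: "S x \<union> S y \<subseteq> S (sup x y)" using S_mono[of x "sup x y"] S_mono[of y "sup x y"] by simp
  have "sup x y = e"
  proof (rule ccontr)
    assume "sup x y \<noteq> e"
    then have "sup x y < e" using le_neq_trans[OF le] by blast
    then have "S (sup x y) \<subset> S e" using S_strict by blast
    then show False using ge Se by blast
  qed
  then show ?thesis unfolding e_def .
qed

lemma meet_Q:
  assumes x: "x \<in> QQ" and y: "y \<in> QQ"
  shows "inf x y = E n (S x \<inter> S y)"
proof -
  have ix: "ideal (S x)" "x = E n (S x)" using Q_E x by blast+
  have iy: "ideal (S y)" "y = E n (S y)" using Q_E y by blast+
  have iu: "ideal (S x \<inter> S y)" using ideal_Int ix iy by blast
  have sx: "S x \<subseteq> LP n" and sy: "S y \<subseteq> LP n" using S_sub_Pi by blast+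
  have su: "S x \<inter> S y \<subseteq> LP n" using S_sub_Pi by blast
  define e where "e = E n (S x \<inter> S y)"
  have Se: "S e = S x \<inter> S y" using E_props[OF _ iu su] unfolding e_def by simp
  have "e \<le> x" using E_mono[OF _ iu ix(1) _ sx] ix(2) unfolding e_def by simp
  moreover have "e \<le> y" using E_mono[OF _ iu iy(1) _ sy] iy(2) unfolding e_def by simp
  ultimately have le: "e \<le> inf x y" by simp
  have ge: "S (inf x y) \<subseteq> S x \<inter> S y" using S_mono[of "inf x y" x] S_mono[of "inf x y" y] by simp
  have "inf x y = e"
  proof (rule ccontr)
    assume "inf x y \<noteq> e"
    then have "e \<noteq> inf x y" by (rule not_sym)
    then have "e < inf x y" using le_neq_trans[OF le] by blast
    then have "S e \<subset> S (inf x y)" using S_strict by blast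
    then show False using ge Se by blast
  qed
  then show ?thesis unfolding e_def .
qed

lemma S_E: "ideal A \<Longrightarrow> A \<subseteq> LP n \<Longrightarrow> S (E n A) = A"
  using E_props[of n A] by simp

lemma main:
  "(\<forall>x\<in>QQ. \<forall>y\<in>QQ. sup x y \<in> QQ \<and> inf x y \<in> QQ)
 \<and> (\<forall>x\<in>QQ. \<forall>y\<in>QQ. \<forall>z\<in>QQ. inf x (sup y z) = sup (inf x y) (inf x z))"
proof (intro conjI ballI)
  fix x y assume x: "x \<in> QQ" and y: "y \<in> QQ"
  have ix: "ideal (S x)" using Q_E x by blast
  have iy: "ideal (S y)" using Q_E y by blast
  show "sup x y \<in> QQ" using join_Q[OF x y] E_Q[OF ideal_Un[OF ix iy]] S_sub_Pi by simp
  have "S x \<inter> S y \<subseteq> LP n" using S_sub_Pi[of x] by blast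
  then show "inf x y \<in> QQ" using meet_Q[OF x y] E_Q[OF ideal_Int[OF ix iy]] by simp
next
  fix x y z assume x: "x \<in> QQ" and y: "y \<in> QQ" and z: "z \<in> QQ"
  have ix: "ideal (S x)" using Q_E x by blast
  have iy: "ideal (S y)" using Q_E y by blast
  have iz: "ideal (S z)" using Q_E z by blast
  have P: "S w \<subseteq> LP n" for w using S_sub_Pi by blast
  have Pyz: "S y \<union> S z \<subseteq> LP n" using P[of y] P[of z] by blast
  have Pxy: "S x \<inter> S y \<subseteq> LP n" using P[of x] by blast
  have Pxz: "S x \<inter> S z \<subseteq> LP n" using P[of x] by blast
  have yz: "sup y z \<in> QQ" using join_Q[OF y z] E_Q[OF ideal_Un[OF iy iz] Pyz] by simp
  have Syz: "S (sup y z) = S y \<union> S z" using join_Q[OF y z] S_E[OF ideal_Un[OF iy iz] Pyz] by simp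
  have xy: "inf x y \<in> QQ" using meet_Q[OF x y] E_Q[OF ideal_Int[OF ix iy] Pxy] by simp
  have Sxy: "S (inf x y) = S x \<inter> S y" using meet_Q[OF x y] S_E[OF ideal_Int[OF ix iy] Pxy] by simp
  have xz: "inf x z \<in> QQ" using meet_Q[OF x z] E_Q[OF ideal_Int[OF ix iz] Pxz] by simp
  have Sxz: "S (inf x z) = S x \<inter> S z" using meet_Q[OF x z] S_E[OF ideal_Int[OF ix iz] Pxz] by simp
  have "inf x (sup y z) = E n (S x \<inter> (S y \<union> S z))" using meet_Q[OF x yz] Syz by simp
  moreover have "sup (inf x y) (inf x z) = E n ((S x \<inter> S y) \<union> (S x \<inter> S z))" using join_Q[OF xy xz] Sxy Sxz by simp
  moreover have "S x \<inter> (S y \<union> S z) = (S x \<inter> S y) \<union> (S x \<inter> S z)" by blast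
  ultimately show "inf x (sup y z) = sup (inf x y) (inf x z)" by simp
qed

end

theorem mainTheorem7:
  fixes lab :: "'a::{finite, lattice} \<Rightarrow> 'a \<Rightarrow> nat" and n :: nat and m :: "'a list"
  assumes "graded_rank TYPE('a) n"
    and "Sn_EL_labeling n lab"
    and "max_chain m"
  shows "(\<forall>x\<in>Q_set n lab m. \<forall>y\<in>Q_set n lab m.
            sup x y \<in> Q_set n lab m \<and> inf x y \<in> Q_set n lab m)
       \<and> (\<forall>x\<in>Q_set n lab m. \<forall>y\<in>Q_set n lab m. \<forall>z\<in>Q_set n lab m.
            inf x (sup y z) = sup (inf x y) (inf x z))"
proof -
  interpret sel lab n m using assms by unfold_locales
  show ?thesis using main .
qed

end
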